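(* Let $\delta>0$ and let $S=\{p_1,\dots,p_n\}$ be a set of $n$ points in $\mathbb{R}^d$. Determining all pairs $i\ne j$ such that $\|p_i-p_j\|_\infty\le\delta$ can be done using $O(dn\log n)$ pairwise comparisons of real numbers (i.e., by a 2-linear decision tree of depth $O(dn\log n)$).
   Context: $\|x\|_\infty=\max_k |x[k]|$. A $k$-linear decision tree is one in which each branching is based on the sign of a linear expression with at most $k$ terms; its complexity is its depth. *)

theory Defs
  imports Complex_Main
begin

text \<open>An internal node carries a linear expression
  c0 + a1*x_v1 + ... + am*x_vm (stored as the constant c0 and the list of
  (variable, coefficient) terms) and branches three ways on its sign
  (negative / zero / positive).\<close>

datatype ('v, 'o) ldt =
    Leaf 'o
  | Node "real \<times> ('v \<times> real) list" "('v, 'o) ldt" "('v, 'o) ldt" "('v, 'o) ldt"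

definition lin_val :: "('v \<Rightarrow> real) \<Rightarrow> real \<times> ('v \<times> real) list \<Rightarrow> real" where
  "lin_val x e = fst e + sum_list (map (\<lambda>(v, a). a * x v) (snd e))"

fun eval_ldt :: "('v \<Rightarrow> real) \<Rightarrow> ('v, 'o) ldt \<Rightarrow> 'o" where
  "eval_ldt x (Leaf r) = r"
| "eval_ldt x (Node e tn tz tp) =
     (if lin_val x e < 0 then eval_ldt x tn
      else if lin_val x e = 0 then eval_ldt x tz
      else eval_ldt x tp)"

fun depth_ldt :: "('v, 'o) ldt \<Rightarrow> nat" where
  "depth_ldt (Leaf r) = 0"
| "depth_ldt (Node e tn tz tp) = Suc (max (depth_ldt tn) (max (depth_ldt tz) (depth_ldt tp)))"

fun k_linear :: "nat \<Rightarrow> ('v, 'o) ldt \<Rightarrow> bool" where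
  "k_linear k (Leaf r) = True"
| "k_linear k (Node e tn tz tp) =
     (length (snd e) \<le> k \<and> k_linear k tn \<and> k_linear k tz \<and> k_linear k tp)"

definition linf_dist :: "nat \<Rightarrow> (nat \<Rightarrow> real) \<Rightarrow> (nat \<Rightarrow> real) \<Rightarrow> real" where
  "linf_dist d x y = Max ((\<lambda>k. \<bar>x k - y k\<bar>) ` {..<d})"

end

theory Submission
  imports Defs
begin

fun bindt :: "('v,'a) ldt \<Rightarrow> ('a \<Rightarrow> ('v,'b) ldt) \<Rightarrow> ('v,'b) ldt" where
  "bindt (Leaf r) f = f r"
| "bindt (Node e a b c) f = Node e (bindt a f) (bindt b f) (bindt c f)"

fun leaves :: "('v,'a) ldt \<Rightarrow> 'a set" where
  "leaves (Leaf r) = {r}"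
| "leaves (Node e a b c) = leaves a \<union> leaves b \<union> leaves c"

lemma eval_bindt: "eval_ldt x (bindt T f) = eval_ldt x (f (eval_ldt x T))"
  by (induction T) auto

lemma depth_bindt: "(\<And>r. r \<in> leaves T \<Longrightarrow> depth_ldt (f r) \<le> M) \<Longrightarrow> depth_ldt (bindt T f) \<le> depth_ldt T + M"
proof (induction T)
  case (Leaf x)
  then show ?case by simp
next
  case (Node e a b c)
  have "depth_ldt (bindt a f) \<le> depth_ldt a + M" "depth_ldt (bindt b f) \<le> depth_ldt b + M"
       "depth_ldt (bindt c f) \<le> depth_ldt c + M" using Node by auto
  then show ?case by (simp add: max_def)
qed

lemma leaves_bindt: "leaves (bindt T f) = (\<Union>r\<in>leaves T. leaves (f r))"
  by (induction T) auto

lemma klin_bindt: "k_linear k T \<Longrightarrow> (\<And>r. k_linear k (f r)) \<Longrightarrow> k_linear k (bindt T f)"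
  by (induction T) auto

definition mapt :: "('a \<Rightarrow> 'b) \<Rightarrow> ('v,'a) ldt \<Rightarrow> ('v,'b) ldt" where
  "mapt f T = bindt T (\<lambda>r. Leaf (f r))"

lemma eval_mapt[simp]: "eval_ldt x (mapt f T) = f (eval_ldt x T)"
  by (simp add: mapt_def eval_bindt)

lemma depth_mapt[simp]: "depth_ldt (mapt f T) = depth_ldt T"
  unfolding mapt_def by (induction T) auto

lemma leaves_mapt[simp]: "leaves (mapt f T) = f ` leaves T"
  unfolding mapt_def by (induction T) auto

lemma klin_mapt[simp]: "k_linear k (mapt f T) = k_linear k T"
  unfolding mapt_def by (induction T) auto

fun merge_t :: "('i \<Rightarrow> 'i \<Rightarrow> real \<times> ('v \<times> real) list) \<Rightarrow> ('i \<Rightarrow> 'i \<Rightarrow> bool) \<Rightarrow> 'i list \<Rightarrow> 'i list \<Rightarrow> ('v,'i list) ldt" where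
  "merge_t E tb [] ys = Leaf ys"
| "merge_t E tb xs [] = Leaf xs"
| "merge_t E tb (x#xs) (y#ys) = Node (E x y) (mapt (Cons x) (merge_t E tb xs (y#ys)))
     (if tb x y then mapt (Cons x) (merge_t E tb xs (y#ys)) else mapt (Cons y) (merge_t E tb (x#xs) ys))
     (mapt (Cons y) (merge_t E tb (x#xs) ys))"

definition cmpR where
  "cmpR E tb x u w = (lin_val x (E u w) < 0 \<or> (lin_val x (E u w) = 0 \<and> tb u w))"

fun mrg :: "('i \<Rightarrow> 'i \<Rightarrow> bool) \<Rightarrow> 'i list \<Rightarrow> 'i list \<Rightarrow> 'i list" where
  "mrg R [] ys = ys"
| "mrg R xs [] = xs"
| "mrg R (x#xs) (y#ys) = (if R x y then x # mrg R xs (y#ys) else y # mrg R (x#xs) ys)"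

lemma eval_merge: "eval_ldt x (merge_t E tb xs ys) = mrg (cmpR E tb x) xs ys"
  by (induction E tb xs ys rule: merge_t.induct) (auto simp: cmpR_def)

lemma set_mrg: "set (mrg R xs ys) = set xs \<union> set ys"
  by (induction R xs ys rule: mrg.induct) auto

lemma sorted_mrg0:
  "(\<forall>a b. R a b \<or> R b a) \<Longrightarrow> (\<forall>a b c. R a b \<longrightarrow> R b c \<longrightarrow> R a c) \<Longrightarrow>
   sorted_wrt R xs \<Longrightarrow> sorted_wrt R ys \<Longrightarrow> sorted_wrt R (mrg R xs ys)"
proof (induction R xs ys rule: mrg.induct)
  case (3 R x xs y ys)
  show ?case
  proof (cases "R x y")
    case True
    then show ?thesis using 3 by (auto simp: set_mrg)
  next
    case False
    then have "R y x" using 3(3) by blast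
    then show ?thesis using 3 False by (auto simp: set_mrg)
  qed
qed auto

lemma sorted_mrg:
  assumes tot: "\<And>a b. R a b \<or> R b a" and tr: "\<And>a b c. R a b \<Longrightarrow> R b c \<Longrightarrow> R a c"
  shows "sorted_wrt R xs \<Longrightarrow> sorted_wrt R ys \<Longrightarrow> sorted_wrt R (mrg R xs ys)"
  using sorted_mrg0[of R xs ys] tot tr by blast

lemma leaves_merge: "l \<in> leaves (merge_t E tb xs ys) \<Longrightarrow> length l = length xs + length ys"
  by (induction E tb xs ys arbitrary: l rule: merge_t.induct) (auto split: if_splits)

lemma depth_merge: "depth_ldt (merge_t E tb xs ys) \<le> length xs + length ys"
  by (induction E tb xs ys rule: merge_t.induct) (auto simp: max_def)

lemma klin_merge: "(\<And>u w. length (snd (E u w)) \<le> k) \<Longrightarrow> k_linear k (merge_t E tb xs ys)"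
  by (induction E tb xs ys rule: merge_t.induct) auto

definition combt where
  "combt E tb A B = bindt A (\<lambda>l. bindt B (\<lambda>r. merge_t E tb l r))"

function msort_t :: "('i \<Rightarrow> 'i \<Rightarrow> real \<times> ('v \<times> real) list) \<Rightarrow> ('i \<Rightarrow> 'i \<Rightarrow> bool) \<Rightarrow> 'i list \<Rightarrow> ('v,'i list) ldt" where
  "msort_t E tb xs = (if length xs \<le> 1 then Leaf xs else
     combt E tb (msort_t E tb (take (length xs div 2) xs)) (msort_t E tb (drop (length xs div 2) xs)))"
  by pat_completeness auto
termination by (relation "measure (\<lambda>(E,tb,xs). length xs)") auto

declare msort_t.simps[simp del]

lemma leaves_combt: "l \<in> leaves (combt E tb A B) \<Longrightarrow> \<exists>l1\<in>leaves A. \<exists>r\<in>leaves B. length l = length l1 + length r"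
  unfolding combt_def leaves_bindt using leaves_merge by blast

lemma leaves_msort: "l \<in> leaves (msort_t E tb xs) \<Longrightarrow> length l = length xs"
proof (induction xs arbitrary: l rule: length_induct)
  case (1 xs)
  show ?case
  proof (cases "length xs \<le> 1")
    case True
    then show ?thesis using 1(2) by (simp add: msort_t.simps[of _ _ xs])
  next
    case False
    let ?h = "length xs div 2"
    have "l \<in> leaves (combt E tb (msort_t E tb (take ?h xs)) (msort_t E tb (drop ?h xs)))"
      using 1(2) False by (simp add: msort_t.simps[of _ _ xs])
    then obtain l1 r where l1: "l1 \<in> leaves (msort_t E tb (take ?h xs))"
      and r: "r \<in> leaves (msort_t E tb (drop ?h xs))" and len: "length l = length l1 + length r"
      using leaves_combt by blast
    have "length l1 = length (take ?h xs)" using 1(1)[rule_format, of "take ?h xs" l1] l1 False by auto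
    moreover have "length r = length (drop ?h xs)" using 1(1)[rule_format, of "drop ?h xs" r] r False by auto
    ultimately show ?thesis using len False by simp
  qed
qed

lemma eval_msort:
  assumes tot: "\<And>a b. cmpR E tb x a b \<or> cmpR E tb x b a"
    and tr: "\<And>a b c. cmpR E tb x a b \<Longrightarrow> cmpR E tb x b c \<Longrightarrow> cmpR E tb x a c"
  shows "set (eval_ldt x (msort_t E tb xs)) = set xs \<and> sorted_wrt (cmpR E tb x) (eval_ldt x (msort_t E tb xs))"
proof (induction xs rule: length_induct)
  case (1 xs)
  show ?case
  proof (cases "length xs \<le> 1")
    case True
    have "eval_ldt x (msort_t E tb xs) = xs" using True by (simp add: msort_t.simps[of _ _ xs])
    moreover have "sorted_wrt (cmpR E tb x) xs" using True
      by (cases xs) auto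
    ultimately show ?thesis by simp
  next
    case False
    let ?h = "length xs div 2"
    have a: "set (eval_ldt x (msort_t E tb (take ?h xs))) = set (take ?h xs) \<and> sorted_wrt (cmpR E tb x) (eval_ldt x (msort_t E tb (take ?h xs)))"
      using 1 False by auto
    have b: "set (eval_ldt x (msort_t E tb (drop ?h xs))) = set (drop ?h xs) \<and> sorted_wrt (cmpR E tb x) (eval_ldt x (msort_t E tb (drop ?h xs)))"
      using 1 False by auto
    have e: "eval_ldt x (msort_t E tb xs) = mrg (cmpR E tb x) (eval_ldt x (msort_t E tb (take ?h xs))) (eval_ldt x (msort_t E tb (drop ?h xs)))"
      using False by (simp add: msort_t.simps[of _ _ xs] combt_def eval_bindt eval_merge)
    have "set (take ?h xs) \<union> set (drop ?h xs) = set xs"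
      by (metis append_take_drop_id set_append)
    then show ?thesis using a b e sorted_mrg[where R="cmpR E tb x", OF tot tr] by (simp add: set_mrg)
  qed
qed

lemma depth_combt:
  assumes "\<And>l. l \<in> leaves A \<Longrightarrow> length l = a" "\<And>r. r \<in> leaves B \<Longrightarrow> length r = b"
  shows "depth_ldt (combt E tb A B) \<le> depth_ldt A + (depth_ldt B + (a + b))"
  unfolding combt_def
proof (rule depth_bindt)
  fix l assume l: "l \<in> leaves A"
  show "depth_ldt (bindt B (merge_t E tb l)) \<le> depth_ldt B + (a + b)"
  proof (rule depth_bindt)
    fix r assume "r \<in> leaves B"
    then show "depth_ldt (merge_t E tb l r) \<le> a + b"
      using depth_merge[of E tb l r] assms l by auto
  qed
qed

lemma depth_msort: "length xs \<le> 2 ^ L \<Longrightarrow> depth_ldt (msort_t E tb xs) \<le> length xs * L"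
proof (induction xs arbitrary: L rule: length_induct)
  case (1 xs)
  show ?case
  proof (cases "length xs \<le> 1")
    case True
    then show ?thesis by (simp add: msort_t.simps[of _ _ xs])
  next
    case False
    let ?h = "length xs div 2"
    obtain L' where L: "L = Suc L'" using 1(2) False
      by (cases L) auto
    have h1: "length (take ?h xs) \<le> 2 ^ L'" using 1(2) L by auto
    have h2: "length (drop ?h xs) \<le> 2 ^ L'" using 1(2) L by auto
    have d1: "depth_ldt (msort_t E tb (take ?h xs)) \<le> length (take ?h xs) * L'"
      using 1(1)[rule_format, of "take ?h xs" L'] h1 False by auto
    have d2: "depth_ldt (msort_t E tb (drop ?h xs)) \<le> length (drop ?h xs) * L'"
      using 1(1)[rule_format, of "drop ?h xs" L'] h2 False by auto
    have "depth_ldt (msort_t E tb xs) \<le> depth_ldt (msort_t E tb (take ?h xs)) + (depth_ldt (msort_t E tb (drop ?h xs)) + (length (take ?h xs) + length (drop ?h xs)))"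
      using False by (simp only: msort_t.simps[of _ _ xs] if_False)
        (rule depth_combt; erule leaves_msort)
    also have "\<dots> \<le> length (take ?h xs) * L' + (length (drop ?h xs) * L' + (length (take ?h xs) + length (drop ?h xs)))"
      using d1 d2 by linarith
    also have "\<dots> = (length (take ?h xs) + length (drop ?h xs)) * Suc L'"
      by (simp only: mult_Suc_right add_mult_distrib)
    also have "\<dots> = length xs * L" using L by simp
    finally show ?thesis .
  qed
qed

lemma klin_msort: "(\<And>u w. length (snd (E u w)) \<le> k) \<Longrightarrow> k_linear k (msort_t E tb xs)"
proof (induction xs rule: length_induct)
  case (1 xs)
  show ?case
  proof (cases "length xs \<le> 1")
    case True
    then show ?thesis by (simp add: msort_t.simps[of _ _ xs])
  next
    case False
    let ?h = "length xs div 2"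
    have a: "k_linear k (msort_t E tb (take ?h xs))" using 1(1)[rule_format, of "take ?h xs"] 1(2) False by auto
    have b: "k_linear k (msort_t E tb (drop ?h xs))" using 1(1)[rule_format, of "drop ?h xs"] 1(2) False by auto
    have c: "k_linear k (combt E tb (msort_t E tb (take ?h xs)) (msort_t E tb (drop ?h xs)))"
      unfolding combt_def
      by (rule klin_bindt[OF a], rule klin_bindt[OF b], rule klin_merge, rule 1(2))
    show ?thesis using False c by (simp add: msort_t.simps[of _ _ xs])
  qed
qed


primrec all_t :: "('v,'a) ldt list \<Rightarrow> ('v,'a list) ldt" where
  "all_t [] = Leaf []"
| "all_t (T#Ts) = bindt T (\<lambda>a. mapt (Cons a) (all_t Ts))"

lemma eval_all_t: "eval_ldt x (all_t Ts) = map (eval_ldt x) Ts"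
  by (induction Ts) (auto simp: eval_bindt)

lemma depth_all_t: "(\<And>T. T \<in> set Ts \<Longrightarrow> depth_ldt T \<le> M) \<Longrightarrow> depth_ldt (all_t Ts) \<le> length Ts * M"
proof (induction Ts)
  case (Cons T Ts)
  have "depth_ldt (all_t (T#Ts)) \<le> depth_ldt T + length Ts * M"
    using Cons by (simp del: depth_ldt.simps) (rule depth_bindt, simp)
  moreover have "depth_ldt T \<le> M" using Cons.prems by simp
  ultimately show ?case by simp
qed simp

lemma klin_all_t: "(\<And>T. T \<in> set Ts \<Longrightarrow> k_linear k T) \<Longrightarrow> k_linear k (all_t Ts)"
  by (induction Ts) (auto intro!: klin_bindt)

definition Ek :: "nat \<Rightarrow> real \<Rightarrow> nat \<times> bool \<Rightarrow> nat \<times> bool \<Rightarrow> real \<times> ((nat \<times> nat) \<times> real) list" where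
  "Ek k \<delta> u w = ((if snd u then \<delta> else 0) - (if snd w then \<delta> else 0), [((fst u, k), 1), ((fst w, k), -1)])"

definition tbk :: "nat \<times> bool \<Rightarrow> nat \<times> bool \<Rightarrow> bool" where
  "tbk u w = (snd u \<longrightarrow> snd w)"

definition items :: "nat \<Rightarrow> (nat \<times> bool) list" where
  "items n = map (\<lambda>i. (i, False)) [0..<n] @ map (\<lambda>j. (j, True)) [0..<n]"

definition before :: "'a list \<Rightarrow> 'a \<Rightarrow> 'a \<Rightarrow> bool" where
  "before xs a b = (\<exists>ys zs. xs = ys @ zs \<and> a \<in> set ys \<and> b \<in> set zs)"

lemma before_total: "a \<in> set xs \<Longrightarrow> b \<in> set xs \<Longrightarrow> a \<noteq> b \<Longrightarrow> before xs a b \<or> before xs b a"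
proof (induction xs)
  case (Cons c cs)
  show ?case
  proof (cases "a = c")
    case True
    then have "before (c#cs) a b" unfolding before_def using Cons
      by (intro exI[of _ "[c]"] exI[of _ cs]) auto
    then show ?thesis by blast
  next
    case False
    show ?thesis
    proof (cases "b = c")
      case True
      then have "before (c#cs) b a" unfolding before_def using Cons False
        by (intro exI[of _ "[c]"] exI[of _ cs]) auto
      then show ?thesis by blast
    next
      case False': False
      then have "before cs a b \<or> before cs b a" using Cons False by auto
      then show ?thesis unfolding before_def
        by (metis Cons_eq_appendI list.set_intros(2))
    qed
  qed
qed simp

lemma before_sorted: "sorted_wrt R xs \<Longrightarrow> before xs a b \<Longrightarrow> R a b"
  by (auto simp: before_def sorted_wrt_append)

definition Gk :: "nat \<Rightarrow> real \<Rightarrow> nat \<Rightarrow> (nat \<times> nat, (nat \<times> nat) set) ldt" where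
  "Gk n \<delta> k = mapt (\<lambda>xs. {(i,j). i < n \<and> j < n \<and> before xs (i, False) (j, True)}) (msort_t (Ek k \<delta>) tbk (items n))"

lemma lin_val_Ek: "lin_val (\<lambda>(i, k). p i k) (Ek k \<delta> u w) =
   (p (fst u) k + (if snd u then \<delta> else 0)) - (p (fst w) k + (if snd w then \<delta> else 0))"
  by (simp add: lin_val_def Ek_def)

lemma cmpR_Ek: "cmpR (Ek k \<delta>) tbk (\<lambda>(i, k). p i k) u w =
   (let vu = p (fst u) k + (if snd u then \<delta> else 0); vw = p (fst w) k + (if snd w then \<delta> else 0) in
     vu < vw \<or> (vu = vw \<and> (snd u \<longrightarrow> snd w)))"
  by (simp add: cmpR_def lin_val_Ek tbk_def Let_def)

lemma eval_Gk: "eval_ldt (\<lambda>(i, k). p i k) (Gk n \<delta> k) = {(i,j). i < n \<and> j < n \<and> p i k \<le> p j k + \<delta>}"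
proof -
  let ?x = "\<lambda>(i, k). p i k"
  let ?R = "cmpR (Ek k \<delta>) tbk ?x"
  have tot: "\<And>a b. ?R a b \<or> ?R b a" by (auto simp: cmpR_Ek Let_def)
  have tr: "\<And>a b c. ?R a b \<Longrightarrow> ?R b c \<Longrightarrow> ?R a c" by (auto simp: cmpR_Ek Let_def)
  let ?L = "eval_ldt ?x (msort_t (Ek k \<delta>) tbk (items n))"
  have L: "set ?L = set (items n)" "sorted_wrt ?R ?L" using eval_msort[OF tot tr] by auto
  have key: "before ?L (i, False) (j, True) \<longleftrightarrow> p i k \<le> p j k + \<delta>" if "i < n" "j < n" for i j
  proof
    assume "before ?L (i, False) (j, True)"
    then have "?R (i, False) (j, True)" using before_sorted[OF L(2)] by blast
    then show "p i k \<le> p j k + \<delta>" by (auto simp: cmpR_Ek Let_def)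
  next
    assume le: "p i k \<le> p j k + \<delta>"
    show "before ?L (i, False) (j, True)"
    proof (rule ccontr)
      assume "\<not> before ?L (i, False) (j, True)"
      moreover have "(i, False) \<in> set ?L" "(j, True) \<in> set ?L" using L(1) that by (auto simp: items_def)
      ultimately have "before ?L (j, True) (i, False)" using before_total by fastforce
      then have "?R (j, True) (i, False)" using before_sorted[OF L(2)] by blast
      then show False using le by (auto simp: cmpR_Ek Let_def)
    qed
  qed
  show ?thesis unfolding Gk_def using key by auto
qed

lemma depth_Gk: "2 * n \<le> 2 ^ L \<Longrightarrow> depth_ldt (Gk n \<delta> k) \<le> 2 * n * L"
  unfolding Gk_def using depth_msort[of "items n" L "Ek k \<delta>" tbk] by (simp add: items_def mult_2)

lemma klin_Gk: "k_linear 2 (Gk n \<delta> k)"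
  unfolding Gk_def by (simp add: klin_msort Ek_def)

lemma exists_L: "n \<ge> 1 \<Longrightarrow> \<exists>L. n \<le> 2 ^ L \<and> 2 ^ L < 2 * (n::nat)"
proof (induction n rule: less_induct)
  case (less n)
  show ?case
  proof (cases "n = 1")
    case True
    then show ?thesis by (intro exI[of _ 0]) auto
  next
    case False
    have "(n+1) div 2 < n" "1 \<le> (n+1) div 2" using less(2) False by auto
    then obtain L where L: "(n+1) div 2 \<le> 2 ^ L" "2 ^ L < 2 * ((n+1) div 2)"
      using less(1)[of "(n+1) div 2"] by blast
    have "2 ^ L = (1::nat) \<or> even ((2::nat) ^ L)" by (cases L) auto
    note pw = this
    have m2: "2 * ((n+1) div 2) \<le> n+1" by simp
    have le: "2 ^ L \<le> n" using L(2) m2 by linarith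
    have ne: "2 ^ L \<noteq> n"
    proof
      assume eq: "2 ^ L = n"
      then have ev: "even n" using pw False by auto
      then have "2 * ((n+1) div 2) = n" by (auto elim!: evenE)
      then show False using L(2) eq by simp
    qed
    have "2 ^ L < n" using le ne by simp
    then show ?thesis using L by (intro exI[of _ "Suc L"]) auto
  qed
qed

theorem corollary1:
  "\<exists>C::real. C > 0 \<and>
     (\<forall>(d::nat) (n::nat) (\<delta>::real). d \<ge> 1 \<longrightarrow> n \<ge> 2 \<longrightarrow> \<delta> > 0 \<longrightarrow>
       (\<exists>T :: (nat \<times> nat, (nat \<times> nat) set) ldt.
          k_linear 2 T \<and>
          real (depth_ldt T) \<le> C * real d * real n * ln (real n) \<and>
          (\<forall>p :: nat \<Rightarrow> nat \<Rightarrow> real.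
             eval_ldt (\<lambda>(i, k). p i k) T =
               {(i, j). i < n \<and> j < n \<and> i \<noteq> j \<and> linf_dist d (p i) (p j) \<le> \<delta>})))"
proof (intro exI[of _ "6 / ln 2"] conjI allI impI)
  show "0 < 6 / ln (2::real)" by simp
  fix d n :: nat and \<delta> :: real
  assume d: "1 \<le> d" and n: "2 \<le> n" and \<delta>: "0 < \<delta>"
  define T where "T = mapt (\<lambda>gs. {(i,j). i < n \<and> j < n \<and> i \<noteq> j \<and> (\<forall>k<d. (i,j) \<in> gs ! k \<and> (j,i) \<in> gs ! k)})
     (all_t (map (Gk n \<delta>) [0..<d]))"
  obtain L0 where L0: "n \<le> 2 ^ L0" "2 ^ L0 < 2 * n" using exists_L[of n] n by auto
  define L where "L = Suc L0"
  have L1: "2 * n \<le> 2 ^ L" "2 ^ L \<le> 4 * n" using L0 by (auto simp: L_def)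
  show "\<exists>T :: (nat \<times> nat, (nat \<times> nat) set) ldt.
          k_linear 2 T \<and>
          real (depth_ldt T) \<le> 6 / ln 2 * real d * real n * ln (real n) \<and>
          (\<forall>p :: nat \<Rightarrow> nat \<Rightarrow> real.
             eval_ldt (\<lambda>(i, k). p i k) T =
               {(i, j). i < n \<and> j < n \<and> i \<noteq> j \<and> linf_dist d (p i) (p j) \<le> \<delta>})"
  proof (intro exI[of _ T] conjI allI)
    show "k_linear 2 T" unfolding T_def by (auto intro!: klin_all_t klin_Gk)
    have dep: "depth_ldt T \<le> d * (2 * n * L)" unfolding T_def
      using depth_all_t[of "map (Gk n \<delta>) [0..<d]" "2 * n * L"] depth_Gk[OF L1(1)] by auto
    have lnn: "ln 2 \<le> ln (real n)" using n by simp
    have "real L * ln 2 = ln (2 ^ L)" by (simp add: ln_realpow)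
    also have "\<dots> \<le> ln (4 * real n)"
    proof (rule ln_mono)
      have "real (2 ^ L) \<le> real (4 * n)" using L1(2) by (simp only: of_nat_le_iff)
      then show "(2::real) ^ L \<le> 4 * real n" by simp
    qed simp
    also have "\<dots> = 2 * ln 2 + ln (real n)" using n by (simp add: ln_mult ln_realpow[of 2 2, simplified])
    also have "\<dots> \<le> 3 * ln (real n)" using lnn by simp
    finally have "real L * ln 2 \<le> 3 * ln (real n)" .
    then have Lb: "real L \<le> 3 * ln (real n) / ln 2" by (simp add: field_simps)
    have "real (depth_ldt T) \<le> real (d * (2 * n * L))" using dep by (simp only: of_nat_le_iff)
    also have "\<dots> = real d * (2 * real n * real L)" by simp
    also have "\<dots> \<le> real d * (2 * real n * (3 * ln (real n) / ln 2))"
      using Lb by (intro mult_left_mono) auto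
    also have "\<dots> = 6 / ln 2 * real d * real n * ln (real n)" by simp
    finally show "real (depth_ldt T) \<le> 6 / ln 2 * real d * real n * ln (real n)" .
  next
    fix p :: "nat \<Rightarrow> nat \<Rightarrow> real"
    have fin: "finite ((\<lambda>k. \<bar>p i k - p j k\<bar>) ` {..<d})" "(\<lambda>k. \<bar>p i k - p j k\<bar>) ` {..<d} \<noteq> {}" for i j
    proof -
      have "0 \<in> {..<d}" using d by simp
      then show "finite ((\<lambda>k. \<bar>p i k - p j k\<bar>) ` {..<d})" "(\<lambda>k. \<bar>p i k - p j k\<bar>) ` {..<d} \<noteq> {}" by auto
    qed
    have ld: "linf_dist d (p i) (p j) \<le> \<delta> \<longleftrightarrow> (\<forall>k<d. \<bar>p i k - p j k\<bar> \<le> \<delta>)" for i j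
      unfolding linf_dist_def using Max_le_iff[OF fin(1) fin(2)] by auto
    show "eval_ldt (\<lambda>(i, k). p i k) T =
               {(i, j). i < n \<and> j < n \<and> i \<noteq> j \<and> linf_dist d (p i) (p j) \<le> \<delta>}"
    proof -
      have e: "eval_ldt (\<lambda>(i, k). p i k) (all_t (map (Gk n \<delta>) [0..<d])) ! k =
          {(i,j). i < n \<and> j < n \<and> p i k \<le> p j k + \<delta>}" if "k < d" for k
        using that by (simp add: eval_all_t eval_Gk)
      have "(\<forall>k<d. (i,j) \<in> eval_ldt (\<lambda>(i, k). p i k) (all_t (map (Gk n \<delta>) [0..<d])) ! k \<and>
                 (j,i) \<in> eval_ldt (\<lambda>(i, k). p i k) (all_t (map (Gk n \<delta>) [0..<d])) ! k)
            \<longleftrightarrow> (\<forall>k<d. \<bar>p i k - p j k\<bar> \<le> \<delta>)" if "i < n" "j < n" for i j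
        using that by (simp add: e abs_le_iff algebra_simps)
      then show ?thesis unfolding T_def ld eval_mapt by blast
    qed
  qed
qed

end
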